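(* Let $A_1,\dots,A_m\in\mathrm{Pos}(\mathcal X)$ and $\alpha_1,\dots,\alpha_m\in\mathbb R\cup\{-\infty\}$, and let $\ell:\mathrm{Herm}(\mathcal X)\to\overline{\mathbb R}$ be extended linear with $\ell(\rho)=\sum_{i=1}^m\langle A_i,\rho\rangle\alpha_i$ for all $\rho\in\mathrm{Dens}(\mathcal X)$. Then there exists an extended Hermitian matrix $E=A-\infty B\in\overline{\mathrm{Herm}}(\mathcal X)$ such that $\ell(\rho)=\langle E,\rho\rangle$ for all $\rho\in\mathrm{Dens}(\mathcal X)$.
   Context: $\mathcal X=\mathbb C^n$; $\mathrm{Herm}(\mathcal X)$ Hermitian matrices, $\langle X,Y\rangle=\mathrm{Tr}(X^*Y)$; $\mathrm{Pos}(\mathcal X)$ positive semidefinite; $\mathrm{Dens}(\mathcal X)$ density matrices. $\overline{\mathbb R}=\mathbb R\cup\{\pm\infty\}$ with $0\cdot(-\infty)=0$ and $c\cdot(-\infty)=-\infty$ for $c>0$. An extended linear function $\ell$ satisfies $\ell(\alpha v)=\alpha\ell(v)$ for real $\alpha$ and $\ell(v+v')=\ell(v)+\ell(v')$ whenever $\{\ell(v),\ell(v')\}\ne\{\infty,-\infty\}$. $\overline{\mathrm{Herm}}(\mathcal X)$ is the set of formal expressions $A-\infty B$ with $A\in\mathrm{Herm}(\mathcal X)$, $B\in\mathrm{Pos}(\mathcal X)$, $AB=0$, acting by $\langle A-\infty B,X\rangle=\langle A,X\rangle-\infty\langle B,X\rangle$. *)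

theory Defs
  imports "HOL-Analysis.Analysis" "HOL-Library.Extended_Real"
begin

definition cadj :: "complex^'n^'n \<Rightarrow> complex^'n^'n" where
  "cadj X = (\<chi> i j. cnj (X $ j $ i))"

definition ctrace :: "complex^'n::finite^'n \<Rightarrow> complex" where
  "ctrace X = (\<Sum>i\<in>UNIV. X $ i $ i)"

text \<open>Inner product <X,Y> = Tr(X^* Y), real-valued on Hermitian matrices (we take the real part).\<close>
definition hip :: "complex^'n::finite^'n \<Rightarrow> complex^'n^'n \<Rightarrow> real" where
  "hip X Y = Re (ctrace (cadj X ** Y))"

definition is_herm :: "complex^'n^'n \<Rightarrow> bool" where
  "is_herm X \<longleftrightarrow> cadj X = X"

definition is_pos :: "complex^'n::finite^'n \<Rightarrow> bool" where
  "is_pos X \<longleftrightarrow> is_herm X \<and> (\<forall>v::complex^'n. 0 \<le> Re (\<Sum>i\<in>UNIV. cnj (v $ i) * (X *v v) $ i))"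

definition is_dens :: "complex^'n::finite^'n \<Rightarrow> bool" where
  "is_dens X \<longleftrightarrow> is_pos X \<and> ctrace X = 1"

text \<open>Extended linear function on Herm(X) with values in ereal
  (ereal already satisfies 0 * -inf = 0 and c * -inf = -inf for c > 0).\<close>
definition ext_linear :: "(complex^'n::finite^'n \<Rightarrow> ereal) \<Rightarrow> bool" where
  "ext_linear l \<longleftrightarrow>
     (\<forall>a::real. \<forall>v. is_herm v \<longrightarrow> l (a *\<^sub>R v) = ereal a * l v) \<and>
     (\<forall>v w. is_herm v \<longrightarrow> is_herm w \<longrightarrow> {l v, l w} \<noteq> {\<infinity>, -\<infinity>} \<longrightarrow>
        l (v + w) = l v + l w)"

text \<open>Extended Hermitian matrix A - inf B, given by the pair (A,B).\<close>
definition is_ext_herm :: "complex^'n::finite^'n \<Rightarrow> complex^'n^'n \<Rightarrow> bool" where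
  "is_ext_herm A B \<longleftrightarrow> is_herm A \<and> is_pos B \<and> A ** B = 0"

definition ext_hip :: "complex^'n::finite^'n \<Rightarrow> complex^'n^'n \<Rightarrow> complex^'n^'n \<Rightarrow> ereal" where
  "ext_hip A B X = ereal (hip A X) - \<infinity> * ereal (hip B X)"

end

theory Submission
  imports Defs
begin


definition cdot :: "complex^'n::finite \<Rightarrow> complex^'n \<Rightarrow> complex" where
  "cdot u w = (\<Sum>i\<in>UNIV. cnj (u$i) * w$i)"

definition outer :: "complex^'n \<Rightarrow> complex^'n \<Rightarrow> complex^'n^'n" where
  "outer u w = (\<chi> i j. u$i * cnj (w$j))"

lemma cdot_add_left: "cdot (a + b) w = cdot a w + cdot b w"
  by (simp add: cdot_def sum.distrib distrib_right)
lemma cdot_diff_left: "cdot (a - b) w = cdot a w - cdot b w"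
  by (simp add: cdot_def sum_subtractf left_diff_distrib)
lemma cdot_add_right: "cdot w (a + b) = cdot w a + cdot w b"
  by (simp add: cdot_def sum.distrib distrib_left)
lemma cdot_diff_right: "cdot w (a - b) = cdot w a - cdot w b"
  by (simp add: cdot_def sum_subtractf right_diff_distrib)
lemma cdot_scale_left: "cdot (c *s a) w = cnj c * cdot a w"
  by (simp add: cdot_def sum_distrib_left mult.assoc)
lemma cdot_scale_right: "cdot w (c *s a) = c * cdot w a"
  by (simp add: cdot_def sum_distrib_left mult_ac)
lemma cdot_zero_left[simp]: "cdot 0 w = 0" by (simp add: cdot_def)
lemma cdot_zero_right[simp]: "cdot w 0 = 0" by (simp add: cdot_def)
lemma cdot_cnj: "cnj (cdot u w) = cdot w u"
  by (simp add: cdot_def mult.commute)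
lemma cdot_self_real: "cdot u u = complex_of_real (Re (cdot u u))"
proof -
  have "cnj (cdot u u) = cdot u u" by (rule cdot_cnj)
  then have "Im (cdot u u) = 0" by (simp add: complex_eq_iff)
  then show ?thesis by (simp add: complex_eq_iff)
qed
lemma cdot_self_nonneg: "0 \<le> Re (cdot u u)"
  by (simp add: cdot_def sum_nonneg)
lemma cdot_self_zero: "Re (cdot u u) = 0 \<Longrightarrow> u = 0"
proof -
  assume h: "Re (cdot u u) = 0"
  have "Re (cdot u u) = (\<Sum>i\<in>UNIV. (cmod (u$i))^2)"
    by (simp add: cdot_def complex_mult_cnj cmod_def power2_eq_square)
  then have "\<forall>i\<in>UNIV. (cmod (u$i))^2 = 0" using h
    by (metis (no_types, lifting) finite sum_nonneg_eq_0_iff zero_le_power2)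
  then show "u = 0" by (simp add: vec_eq_iff)
qed
lemma cdot_mat: "cdot u (X *v w) = cdot (cadj X *v u) w"
proof -
  have "cdot u (X *v w) = (\<Sum>i\<in>UNIV. \<Sum>j\<in>UNIV. cnj (u$i) * (X$i$j * w$j))"
    by (simp add: cdot_def matrix_vector_mult_def sum_distrib_left)
  also have "\<dots> = (\<Sum>j\<in>UNIV. \<Sum>i\<in>UNIV. cnj (u$i) * (X$i$j * w$j))"
    by (rule sum.swap)
  also have "\<dots> = cdot (cadj X *v u) w"
    by (simp add: cdot_def cadj_def matrix_vector_mult_def sum_distrib_right sum_distrib_left mult.commute mult.left_commute)
  finally show ?thesis .
qed

lemma cadj_cadj[simp]: "cadj (cadj X) = X" by (simp add: cadj_def vec_eq_iff)
lemma cadj_add: "cadj (X + Y) = cadj X + cadj Y" by (simp add: cadj_def vec_eq_iff)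
lemma cadj_diff: "cadj (X - Y) = cadj X - cadj Y" by (simp add: cadj_def vec_eq_iff)
lemma cadj_zero[simp]: "cadj 0 = 0" by (simp add: cadj_def vec_eq_iff)
lemma cadj_one[simp]: "cadj (mat 1) = mat 1" by (simp add: cadj_def vec_eq_iff mat_def)
lemma cadj_scaleR: "cadj (a *\<^sub>R X) = a *\<^sub>R cadj X" by (simp add: cadj_def vec_eq_iff)
lemma cadj_mult: "cadj (X ** Y) = cadj Y ** cadj X"
  by (simp add: cadj_def vec_eq_iff matrix_matrix_mult_def mult.commute)
lemma cadj_outer: "cadj (outer u w) = outer w u"
  by (simp add: cadj_def outer_def vec_eq_iff mult.commute)
lemma cadj_sum: "cadj (sum f S) = sum (\<lambda>k. cadj (f k)) S"
  by (induction S rule: infinite_finite_induct) (auto simp: cadj_add)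

lemma outer_mult_vec: "outer u v *v w = cdot v w *s u"
  by (simp add: outer_def cdot_def vec_eq_iff matrix_vector_mult_def sum_distrib_left mult_ac)
lemma mat_mult_outer: "X ** outer u v = outer (X *v u) v"
  by (simp add: outer_def vec_eq_iff matrix_vector_mult_def matrix_matrix_mult_def sum_distrib_right mult.assoc)
lemma outer_mult_mat: "outer u v ** X = outer u (cadj X *v v)"
  by (simp add: outer_def cadj_def vec_eq_iff matrix_vector_mult_def matrix_matrix_mult_def sum_distrib_left mult.commute mult.left_commute)
lemma outer_zero[simp]: "outer 0 v = 0" by (simp add: outer_def vec_eq_iff)

lemma herm_add: "is_herm X \<Longrightarrow> is_herm Y \<Longrightarrow> is_herm (X + Y)" by (simp add: is_herm_def cadj_add)
lemma herm_diff: "is_herm X \<Longrightarrow> is_herm Y \<Longrightarrow> is_herm (X - Y)" by (simp add: is_herm_def cadj_diff)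
lemma herm_scaleR: "is_herm X \<Longrightarrow> is_herm (a *\<^sub>R X)" by (simp add: is_herm_def cadj_scaleR)
lemma herm_sum: "(\<And>k. k \<in> S \<Longrightarrow> is_herm (f k)) \<Longrightarrow> is_herm (sum f S)"
  by (induction S rule: infinite_finite_induct) (auto simp: cadj_add is_herm_def)
lemma herm_outer: "is_herm (outer u u)" by (simp add: is_herm_def cadj_outer)

lemma pos_iff: "is_pos X \<longleftrightarrow> is_herm X \<and> (\<forall>v. 0 \<le> Re (cdot v (X *v v)))"
  by (simp add: is_pos_def cdot_def)

lemma ctrace_add: "ctrace (X + Y) = ctrace X + ctrace Y" by (simp add: ctrace_def sum.distrib)
lemma ctrace_outer: "ctrace (X ** outer w w) = cdot w (X *v w)"
  by (simp add: ctrace_def cdot_def outer_def matrix_matrix_mult_def matrix_vector_mult_def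
     sum_distrib_left mult_ac)

lemma hip_add_right: "hip X (Y + Z) = hip X Y + hip X Z"
  by (simp add: hip_def matrix_add_ldistrib ctrace_add)
lemma hip_zero_right[simp]: "hip X 0 = 0" by (simp add: hip_def ctrace_def)
lemma hip_zero_left[simp]: "hip 0 X = 0" by (simp add: hip_def ctrace_def)
lemma hip_sum_right: "hip X (sum f S) = (\<Sum>k\<in>S. hip X (f k))"
  by (induction S rule: infinite_finite_induct) (simp_all add: hip_add_right)
lemma hip_outer: "hip X (outer w w) = Re (cdot w (cadj X *v w))"
  by (simp add: hip_def ctrace_outer)
lemma matrix_add_rdistrib: "((B + C) ** A) = (B ** A) + (C ** A)"
  by (vector matrix_matrix_mult_def sum.distrib[symmetric] field_simps)
lemma hip_add_left: "hip (X + Y) Z = hip X Z + hip Y Z"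
  by (simp add: hip_def cadj_add matrix_add_rdistrib ctrace_add)
lemma hip_sum_left: "hip (sum f S) Z = (\<Sum>k\<in>S. hip (f k) Z)"
  by (induction S rule: infinite_finite_induct) (simp_all add: hip_add_left)
lemma hip_scaleR_left: "hip (a *\<^sub>R X) Z = a * hip X Z"
  by (simp add: hip_def cadj_scaleR ctrace_def scalar_matrix_assoc[symmetric] sum_distrib_left)


lemma mat_vec_scale: "X *v (c *s v) = c *s (X *v (v::complex^'n))"
  by (auto simp: vec_eq_iff matrix_vector_mult_def sum_distrib_left mult.left_commute intro!: sum.cong)

lemma herm_cdot: "is_herm X \<Longrightarrow> cdot (X *v u) w = cdot u (X *v w)"
  by (simp add: cdot_mat is_herm_def)

lemma herm_entry: "is_herm X \<Longrightarrow> cnj (X$j$i) = X$i$j"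
  unfolding is_herm_def cadj_def by (metis vec_lambda_beta)

lemma qf_lin: "cdot (a + t *s b) (X *v (a + t *s b)) =
   cdot a (X *v a) + t * cdot a (X *v b) + cnj t * cdot b (X *v a) + cnj t * t * cdot b (X *v b)"
  by (simp add: matrix_vector_right_distrib mat_vec_scale cdot_add_left cdot_add_right
      cdot_scale_left cdot_scale_right algebra_simps)

lemma cdot_axis_left: "cdot (axis a 1) w = w$a"
proof -
  have eq: "(\<lambda>i. cnj (axis a 1 $ i) * w$i) = (\<lambda>i. if i = a then w$i else 0)" by (auto simp: axis_def)
  show ?thesis unfolding cdot_def eq by simp
qed

lemma mat_axis: "(X *v axis a (1::complex)) $ i = X$i$a"
proof -
  have eq: "(\<lambda>j. X$i$j * axis a 1 $ j) = (\<lambda>j. if j = a then X$i$j else 0)" by (auto simp: axis_def)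
  show ?thesis unfolding matrix_vector_mult_def vec_lambda_beta eq by simp
qed

lemma pos_diag:
  assumes "is_pos X"
  shows "X$a$a = complex_of_real (Re (X$a$a))" "0 \<le> Re (X$a$a)"
proof -
  have h: "is_herm X" using assms by (simp add: pos_iff)
  have "cnj (X$a$a) = X$a$a" using herm_entry[OF h] .
  then have "Im (X$a$a) = 0" by (simp add: complex_eq_iff)
  then show "X$a$a = complex_of_real (Re (X$a$a))" by (simp add: complex_eq_iff)
  have "0 \<le> Re (cdot (axis a 1) (X *v axis a 1))" using assms by (simp add: pos_iff)
  then show "0 \<le> Re (X$a$a)" by (simp add: cdot_axis_left mat_axis)
qed

lemma pos_zero_diag:
  assumes "is_pos X" and "X$a$a = 0"
  shows "X *v axis a 1 = 0"
proof (rule ccontr)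
  assume ne: "X *v axis a 1 \<noteq> 0"
  define y where "y = X *v axis a 1"
  define e :: "complex^'a" where "e = axis a 1"
  have h: "is_herm X" using assms by (simp add: pos_iff)
  define N where "N = Re (cdot y y)"
  define K where "K = Re (cdot y (X *v y))"
  have N0: "N > 0" using cdot_self_nonneg[of y] cdot_self_zero[of y] ne
    unfolding N_def y_def by fastforce
  have K0: "K \<ge> 0" using assms(1) unfolding K_def pos_iff by blast
  have Nc: "cdot y y = complex_of_real N" unfolding N_def by (rule cdot_self_real)
  have e1: "cdot e (X *v e) = 0" using assms(2) by (simp add: e_def cdot_axis_left mat_axis)
  have e2: "cdot e (X *v y) = cdot y y" unfolding y_def e_def using herm_cdot[OF h] by simp
  have e3: "cdot y (X *v e) = cdot y y" unfolding y_def e_def by simp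
  define r where "r = N / (K + 1)"
  have r0: "r > 0" using N0 K0 unfolding r_def by simp
  have "0 \<le> Re (cdot (e + (- complex_of_real r) *s y) (X *v (e + (- complex_of_real r) *s y)))"
    using assms(1) unfolding pos_iff by blast
  also have "\<dots> = - 2 * r * N + r * r * K"
    unfolding qf_lin e1 e2 e3 Nc K_def by simp
  finally have "2 * r * N \<le> r * (r * K)" by (simp add: algebra_simps)
  then have "2 * N \<le> r * K" using r0 by simp
  also have "r * K = N * (K / (K + 1))" unfolding r_def by simp
  also have "\<dots> < N * 1" using N0 K0 by (intro mult_strict_left_mono) auto
  finally show False using N0 by simp
qed



lemma outer_entry: "outer u w $ i $ j = u$i * cnj (w$j)" by (simp add: outer_def)

lemma sum_insert_upd:
  assumes "finite S" "a \<notin> S"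
  shows "(\<Sum>k\<in>insert a S. outer ((w(a:=u)) k) ((w(a:=u)) k)) = outer u u + (\<Sum>k\<in>S. outer (w k) (w k))"
proof -
  have "(\<Sum>k\<in>S. outer ((w(a:=u)) k) ((w(a:=u)) k)) = (\<Sum>k\<in>S. outer (w k) (w k))"
    using assms(2) by (intro sum.cong) auto
  then show ?thesis using assms by (simp add: sum.insert)
qed

lemma pos_decomp_aux:
  "finite S \<Longrightarrow> \<forall>X. is_pos X \<and> (\<forall>i j. i \<notin> S \<or> j \<notin> S \<longrightarrow> X$i$j = 0) \<longrightarrow>
     (\<exists>w. X = (\<Sum>k\<in>S. outer (w k) (w k)))"
proof (induction S rule: finite_induct)
  case empty
  then show ?case by (auto simp: vec_eq_iff)
next
  case (insert a S)
  show ?case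
  proof (intro allI impI, elim conjE)
    fix X :: "complex^'a^'a"
    assume pos: "is_pos X" and supp: "\<forall>i j. i \<notin> insert a S \<or> j \<notin> insert a S \<longrightarrow> X$i$j = 0"
    have h: "is_herm X" using pos by (simp add: pos_iff)
    define c where "c = Re (X$a$a)"
    have Xaa: "X$a$a = complex_of_real c" using pos_diag[OF pos] unfolding c_def by simp
    have c0: "c \<ge> 0" using pos_diag[OF pos] unfolding c_def by simp
    define y where "y = X *v axis a 1"
    have ycol: "\<And>i. y$i = X$i$a" unfolding y_def by (rule mat_axis)
    have hrow: "\<And>j. X$a$j = cnj (X$j$a)" using herm_entry[OF h] by metis
    show "\<exists>w. X = (\<Sum>k\<in>insert a S. outer (w k) (w k))"
    proof (cases "c = 0")
      case True
      then have "y = 0" using pos_zero_diag[OF pos] Xaa unfolding y_def by simp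
      then have col: "\<And>i. X$i$a = 0" using ycol by (metis zero_index)
      have row: "\<And>j. X$a$j = 0" using col hrow by simp
      have "\<forall>i j. i \<notin> S \<or> j \<notin> S \<longrightarrow> X$i$j = 0"
        using supp col row by (metis insert_iff)
      then obtain w where w: "X = (\<Sum>k\<in>S. outer (w k) (w k))" using insert.IH pos by blast
      have "X = (\<Sum>k\<in>insert a S. outer ((w(a:=0)) k) ((w(a:=0)) k))"
        using sum_insert_upd[OF insert.hyps, of w 0] w by simp
      then show ?thesis by blast
    next
      case False
      then have cpos: "c > 0" using c0 by simp
      define s where "s = 1 / sqrt c"
      have ss: "complex_of_real s * complex_of_real s = 1 / complex_of_real c"
      proof -
        have "s * s = 1 / (sqrt c * sqrt c)" unfolding s_def by simp
        also have "\<dots> = 1 / c" using cpos by simp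
        finally have "complex_of_real (s * s) = complex_of_real (1 / c)" by simp
        then show ?thesis by simp
      qed
      define u where "u = complex_of_real s *s y"
      have uent: "\<And>i. u$i = complex_of_real s * X$i$a" unfolding u_def by (simp add: ycol)
      define X' where "X' = X - outer u u"
      have hX': "is_herm X'" unfolding X'_def by (intro herm_diff h herm_outer)
      have quad: "0 \<le> Re (cdot v (X' *v v))" for v
      proof -
        define z where "z = cdot y v"
        define t where "t = - (z / complex_of_real c)"
        have q1: "cdot v (X' *v v) = cdot v (X *v v) - cdot u v * cdot v u"
          unfolding X'_def by (simp add: matrix_vector_mult_diff_rdistrib cdot_diff_right
              outer_mult_vec cdot_scale_right mult.commute)
        have uv: "cdot u v = complex_of_real s * z" unfolding u_def z_def by (simp add: cdot_scale_left)
        have vu: "cdot v u = complex_of_real s * cnj z" unfolding u_def z_def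
          by (simp add: cdot_scale_right cdot_cnj)
        have a1: "cdot v (X *v axis a 1) = cnj z" unfolding z_def y_def by (simp add: cdot_cnj)
        have a2: "cdot (axis a 1) (X *v v) = z" unfolding z_def y_def using herm_cdot[OF h] by simp
        have a3: "cdot (axis a 1) (X *v axis a 1) = complex_of_real c"
          by (simp add: cdot_axis_left mat_axis Xaa)
        have ct: "cnj t = - (cnj z / complex_of_real c)" unfolding t_def by simp
        have "cdot v (X' *v v) = cdot (v + t *s axis a 1) (X *v (v + t *s axis a 1))"
          unfolding qf_lin q1 uv vu a1 a2 a3 ct
          using cpos ss by (simp add: t_def field_simps)
        moreover have "0 \<le> Re (cdot (v + t *s axis a 1) (X *v (v + t *s axis a 1)))"
          using pos by (simp add: pos_iff)
        ultimately show ?thesis by simp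
      qed
      have posX': "is_pos X'" using hX' quad by (simp add: pos_iff)
      have supp': "\<forall>i j. i \<notin> S \<or> j \<notin> S \<longrightarrow> X'$i$j = 0"
      proof (intro allI impI)
        fix i j assume ij: "i \<notin> S \<or> j \<notin> S"
        have e: "X'$i$j = X$i$j - complex_of_real s * complex_of_real s * X$i$a * X$a$j"
          unfolding X'_def by (simp add: outer_entry uent hrow mult_ac)
        show "X'$i$j = 0"
        proof (cases "i = a")
          case True
          then show ?thesis unfolding e ss using cpos by (simp add: Xaa)
        next
          case ia: False
          show ?thesis
          proof (cases "j = a")
            case True
            then show ?thesis unfolding e ss using cpos by (simp add: Xaa)
          next
            case False
            then show ?thesis using ia ij supp unfolding e by auto
          qed
        qed
      qed
      then obtain w where w: "X' = (\<Sum>k\<in>S. outer (w k) (w k))" using insert.IH posX' by blast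
      have "X = outer u u + X'" unfolding X'_def by simp
      then have "X = (\<Sum>k\<in>insert a S. outer ((w(a:=u)) k) ((w(a:=u)) k))"
        using sum_insert_upd[OF insert.hyps, of w u] w by simp
      then show ?thesis by blast
    qed
  qed
qed

lemma pos_decomp: "is_pos (X::complex^'n::finite^'n) \<Longrightarrow> \<exists>w::'n \<Rightarrow> complex^'n. X = (\<Sum>k\<in>UNIV. outer (w k) (w k))"
proof -
  assume p: "is_pos X"
  have "\<forall>X::complex^'n^'n. is_pos X \<and> (\<forall>i j. i \<notin> (UNIV::'n set) \<or> j \<notin> UNIV \<longrightarrow> X$i$j = 0) \<longrightarrow>
     (\<exists>w::'n \<Rightarrow> complex^'n. X = (\<Sum>k\<in>UNIV. outer (w k) (w k)))"
    by (rule pos_decomp_aux) simp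
  then show ?thesis using p by blast
qed



lemma outer_zero_right[simp]: "outer u 0 = 0" by (simp add: outer_def vec_eq_iff)

lemma proj_exists:
  "finite V \<Longrightarrow> \<exists>R::complex^'n::finite^'n. is_herm R \<and> R ** R = R \<and> (\<forall>v\<in>V. R *v v = v) \<and>
     (\<forall>w. (\<forall>v\<in>V. cdot v w = 0) \<longrightarrow> R *v w = 0)"
proof (induction V rule: finite_induct)
  case empty
  show ?case by (rule exI[of _ 0]) (simp add: is_herm_def)
next
  case (insert v V)
  then obtain R :: "complex^'n^'n" where hR: "is_herm R" and idem: "R ** R = R"
    and fix1: "\<forall>x\<in>V. R *v x = x" and ker: "\<forall>w. (\<forall>x\<in>V. cdot x w = 0) \<longrightarrow> R *v w = 0" by blast
  define u where "u = v - R *v v"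
  have Ru: "R *v u = 0" unfolding u_def
    by (simp add: matrix_vector_mult_diff_distrib matrix_vector_mul_assoc idem)
  show ?case
  proof (cases "u = 0")
    case True
    then have "R *v v = v" unfolding u_def by simp
    then show ?thesis using hR idem fix1 ker by auto
  next
    case False
    define N where "N = Re (cdot u u)"
    have N0: "N > 0" using cdot_self_nonneg[of u] cdot_self_zero[of u] False unfolding N_def by fastforce
    have Nc: "cdot u u = complex_of_real N" unfolding N_def by (rule cdot_self_real)
    define s where "s = 1 / sqrt N"
    have ss: "complex_of_real s * complex_of_real s = 1 / complex_of_real N"
    proof -
      have "s * s = 1 / (sqrt N * sqrt N)" unfolding s_def by simp
      also have "\<dots> = 1 / N" using N0 by simp
      finally have "complex_of_real (s * s) = complex_of_real (1 / N)" by simp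
      then show ?thesis by simp
    qed
    define e where "e = complex_of_real s *s u"
    have ee: "cdot e e = 1" unfolding e_def using N0
      by (simp add: cdot_scale_left cdot_scale_right Nc mult.assoc[symmetric] ss)
    have Re0: "R *v e = 0" unfolding e_def by (simp add: mat_vec_scale Ru)
    define R' where "R' = R + outer e e"
    have hR': "is_herm R'" unfolding R'_def by (intro herm_add hR herm_outer)
    have idem': "R' ** R' = R'"
    proof -
      have a: "R ** outer e e = 0" by (simp add: mat_mult_outer Re0)
      have b: "outer e e ** R = 0" using hR by (simp add: outer_mult_mat is_herm_def Re0)
      have c: "outer e e ** outer e e = outer e e"
        by (simp add: outer_mult_mat cadj_outer outer_mult_vec ee)
      show ?thesis unfolding R'_def
        by (simp add: matrix_add_ldistrib matrix_add_rdistrib a b c idem)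
    qed
    have R'x: "\<And>x. R' *v x = R *v x + cdot e x *s e"
      unfolding R'_def by (simp add: matrix_vector_mult_add_rdistrib outer_mult_vec)
    have cex: "\<And>x. cdot e x = complex_of_real s * (cdot v x - cdot v (R *v x))"
      unfolding e_def u_def by (simp add: cdot_scale_left cdot_diff_left herm_cdot[OF hR] right_diff_distrib)
    have uv: "cdot u v = cdot u u"
    proof -
      have "cdot u v = cdot u (u + R *v v)" unfolding u_def by simp
      also have "\<dots> = cdot u u + cdot (R *v u) v" by (simp add: cdot_add_right herm_cdot[OF hR])
      finally show ?thesis by (simp add: Ru)
    qed
    have fixv: "R' *v v = v"
    proof -
      have "cdot e v = complex_of_real s * complex_of_real N"
        unfolding e_def by (simp add: cdot_scale_left uv Nc)
      then have "cdot e v *s e = (complex_of_real s * complex_of_real s * complex_of_real N) *s u"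
        unfolding e_def by (simp add: mult_ac)
      also have "\<dots> = u" using N0 by (simp add: ss)
      finally show ?thesis unfolding R'x u_def by simp
    qed
    have fixV: "\<forall>x\<in>V. R' *v x = x"
    proof
      fix x assume x: "x \<in> V"
      then have "R *v x = x" using fix1 by blast
      then have "cdot e x = 0" by (simp add: cex)
      then show "R' *v x = x" using \<open>R *v x = x\<close> by (simp add: R'x)
    qed
    have kerV: "\<forall>w. (\<forall>x\<in>insert v V. cdot x w = 0) \<longrightarrow> R' *v w = 0"
    proof (intro allI impI)
      fix w assume w: "\<forall>x\<in>insert v V. cdot x w = 0"
      then have Rw: "R *v w = 0" using ker by blast
      have "cdot e w = 0" using w Rw by (simp add: cex)
      then show "R' *v w = 0" using Rw by (simp add: R'x)
    qed
    show ?thesis using hR' idem' fixv fixV kerV by blast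
  qed
qed



lemma sum_minf:
  fixes f :: "'a \<Rightarrow> ereal"
  shows "finite S \<Longrightarrow> (\<forall>x\<in>S. f x \<noteq> \<infinity>) \<Longrightarrow> (\<exists>x\<in>S. f x = -\<infinity>) \<Longrightarrow> sum f S = -\<infinity>"
proof (induction S rule: finite_induct)
  case empty then show ?case by simp
next
  case (insert a S)
  have ns: "sum f S \<noteq> \<infinity>" using insert.prems(1) insert.hyps(1)
    by (simp add: sum_Pinfty)
  show ?case
  proof (cases "f a = -\<infinity>")
    case True
    then show ?thesis using insert.hyps ns by simp
  next
    case False
    then have "sum f S = -\<infinity>" using insert by auto
    then show ?thesis using insert.hyps insert.prems(1) by simp
  qed
qed

lemma matrix_sum_left: "X ** sum f S = (\<Sum>k\<in>S. X ** f k)"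
  by (induction S rule: infinite_finite_induct) (simp_all add: matrix_add_ldistrib)

lemma sum_mat_vec: "(sum f S) *v (x::complex^'n::finite) = (\<Sum>k\<in>S. f k *v x)"
  by (induction S rule: infinite_finite_induct) (simp_all add: matrix_vector_mult_add_rdistrib)

lemma cdot_sum_right: "cdot w (sum f S) = (\<Sum>k\<in>S. cdot w (f k))"
  by (induction S rule: infinite_finite_induct) (simp_all add: cdot_add_right)

lemma qf_outer_sum:
  "Re (cdot w ((\<Sum>k\<in>S. outer (v k) (v k)) *v w)) = (\<Sum>k\<in>S. (cmod (cdot (v k) w))^2)"
proof -
  have "\<And>k. Re (cdot w (outer (v k) (v k) *v w)) = (cmod (cdot (v k) w))^2"
  proof -
    fix k
    have "cdot w (outer (v k) (v k) *v w) = cdot (v k) w * cnj (cdot (v k) w)"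
      by (simp add: outer_mult_vec cdot_scale_right cdot_cnj)
    then show "Re (cdot w (outer (v k) (v k) *v w)) = (cmod (cdot (v k) w))^2"
      by (simp add: complex_mult_cnj cmod_power2)
  qed
  then show ?thesis by (simp add: sum_mat_vec cdot_sum_right Re_sum)
qed

lemma pos_add: "is_pos X \<Longrightarrow> is_pos Y \<Longrightarrow> is_pos (X + Y)"
  by (auto simp: pos_iff herm_add matrix_vector_mult_add_rdistrib cdot_add_right
      intro: add_nonneg_nonneg)

lemma pos_sum: "(\<And>k. k \<in> S \<Longrightarrow> is_pos (f k)) \<Longrightarrow> is_pos (sum f S)"
proof (induction S rule: infinite_finite_induct)
  case (infinite S) then show ?case by (simp add: pos_iff is_herm_def)
next
  case empty then show ?case by (simp add: pos_iff is_herm_def)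
next
  case (insert x F) then show ?case by (simp add: pos_add)
qed

lemma matrix_diff_rdistrib: "((B - C) ** A) = (B ** A) - (C ** (A::complex^'n^'n))"
  by (vector matrix_matrix_mult_def sum_subtractf[symmetric] field_simps)



theorem lemmaA1:
  fixes m :: nat
    and As :: "nat \<Rightarrow> complex^'n::finite^'n"
    and \<alpha> :: "nat \<Rightarrow> ereal"
    and l :: "complex^'n^'n \<Rightarrow> ereal"
  assumes "\<forall>i\<in>{1..m}. is_pos (As i)"
    and "\<forall>i\<in>{1..m}. \<alpha> i \<noteq> \<infinity>"
    and "ext_linear l"
    and "\<forall>\<rho>. is_dens \<rho> \<longrightarrow> l \<rho> = (\<Sum>i=1..m. ereal (hip (As i) \<rho>) * \<alpha> i)"
  shows "\<exists>A B. is_ext_herm A B \<and> (\<forall>\<rho>. is_dens \<rho> \<longrightarrow> l \<rho> = ext_hip A B \<rho>)"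
proof -
  define I where "I = {i\<in>{1..m}. \<alpha> i = -\<infinity>}"
  define J where "J = {i\<in>{1..m}. \<alpha> i \<noteq> -\<infinity>}"
  have IJ: "I \<union> J = {1..m}" "I \<inter> J = {}" "finite I" "finite J" unfolding I_def J_def by auto
  have "\<forall>i\<in>{1..m}. \<exists>w::'n \<Rightarrow> complex^'n. As i = (\<Sum>k\<in>UNIV. outer (w k) (w k))"
    using assms(1) pos_decomp by blast
  from bchoice[OF this] obtain V :: "nat \<Rightarrow> 'n \<Rightarrow> complex^'n"
    where V: "\<forall>i\<in>{1..m}. As i = (\<Sum>k\<in>UNIV. outer (V i k) (V i k))"
    by blast
  define Vs where "Vs = (\<lambda>(i,k). V i k) ` (I \<times> UNIV)"
  have "finite Vs" unfolding Vs_def using IJ(3) by simp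
  then obtain R :: "complex^'n^'n" where hR: "is_herm R" and idem: "R ** R = R"
    and fixR: "\<forall>v\<in>Vs. R *v v = v" and kerR: "\<forall>w. (\<forall>v\<in>Vs. cdot v w = 0) \<longrightarrow> R *v w = 0"
    using proj_exists by blast
  define Q :: "complex^'n^'n" where "Q = mat 1 - R"
  have hQ: "is_herm Q" unfolding Q_def using hR by (simp add: is_herm_def cadj_diff)
  define P where "P = (\<Sum>i\<in>I. As i)"
  define A' where "A' = (\<Sum>i\<in>J. real_of_ereal (\<alpha> i) *\<^sub>R As i)"
  define A where "A = Q ** A' ** Q"
  have hAs: "\<And>i. i \<in> {1..m} \<Longrightarrow> is_herm (As i)" using assms(1) by (simp add: pos_iff)
  have hA': "is_herm A'" unfolding A'_def using hAs
    by (intro herm_sum herm_scaleR) (auto simp: J_def)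
  have hA: "is_herm A" using hA' hQ unfolding A_def is_herm_def
    by (simp add: cadj_mult matrix_mul_assoc)
  have posP: "is_pos P" unfolding P_def using assms(1) by (intro pos_sum) (auto simp: I_def)
  have RAs: "R ** As i = As i" if "i \<in> I" for i
  proof -
    have im: "i \<in> {1..m}" using that by (auto simp: I_def)
    have "R ** As i = (\<Sum>k\<in>UNIV. outer (R *v V i k) (V i k))"
      using V im by (simp add: matrix_sum_left mat_mult_outer)
    also have "\<dots> = (\<Sum>k\<in>UNIV. outer (V i k) (V i k))"
      using fixR that unfolding Vs_def by (intro sum.cong) auto
    finally show ?thesis using V im by simp
  qed
  have RP: "R ** P = P" unfolding P_def using RAs by (simp add: matrix_sum_left)
  have QP: "Q ** P = 0" unfolding Q_def by (simp add: matrix_diff_rdistrib RP)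
  have AP: "A ** P = 0" unfolding A_def by (simp add: matrix_mul_assoc[symmetric] QP)
  have ext: "is_ext_herm A P" using hA posP AP by (simp add: is_ext_herm_def)
  have main: "l \<rho> = ext_hip A P \<rho>" if dens: "is_dens \<rho>" for \<rho>
  proof -
    obtain w :: "'n \<Rightarrow> complex^'n" where w: "\<rho> = (\<Sum>k\<in>UNIV. outer (w k) (w k))"
      using dens pos_decomp unfolding is_dens_def by blast
    have hipf: "hip X \<rho> = (\<Sum>k\<in>UNIV. Re (cdot (w k) (X *v w k)))" if "is_herm X" for X
      using that unfolding w by (simp add: hip_sum_right hip_outer is_herm_def)
    define h where "h i = hip (As i) \<rho>" for i
    have hqf: "h i = (\<Sum>k\<in>UNIV. \<Sum>j\<in>UNIV. (cmod (cdot (V i j) (w k)))^2)" if "i \<in> {1..m}" for i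
      unfolding h_def using hipf[OF hAs[OF that]] V that by (simp add: qf_outer_sum)
    have h0: "h i \<ge> 0" if "i \<in> {1..m}" for i
      unfolding hqf[OF that] by (intro sum_nonneg) auto
    have hP: "hip P \<rho> = (\<Sum>i\<in>I. h i)" unfolding P_def h_def by (simp add: hip_sum_left)
    have hA'r: "hip A' \<rho> = (\<Sum>i\<in>J. real_of_ereal (\<alpha> i) * h i)"
      unfolding A'_def h_def by (simp add: hip_sum_left hip_scaleR_left)
    have lsplit: "l \<rho> = (\<Sum>i\<in>I. ereal (h i) * \<alpha> i) + (\<Sum>i\<in>J. ereal (h i) * \<alpha> i)"
      using assms(4) dens IJ unfolding h_def by (simp add: sum.union_disjoint[symmetric])
    have Jsum: "(\<Sum>i\<in>J. ereal (h i) * \<alpha> i) = ereal (hip A' \<rho>)"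
    proof -
      have "(\<Sum>i\<in>J. ereal (h i) * \<alpha> i) = (\<Sum>i\<in>J. ereal (real_of_ereal (\<alpha> i) * h i))"
      proof (intro sum.cong refl)
        fix i assume "i \<in> J"
        then have "\<alpha> i = ereal (real_of_ereal (\<alpha> i))" using assms(2) unfolding J_def
          by (auto intro: ereal_real'[symmetric])
        then show "ereal (h i) * \<alpha> i = ereal (real_of_ereal (\<alpha> i) * h i)"
          by (metis mult.commute times_ereal.simps(1))
      qed
      then show ?thesis by (simp add: hA'r)
    qed
    have hP0: "hip P \<rho> \<ge> 0" unfolding hP using h0 by (intro sum_nonneg) (auto simp: I_def)
    show ?thesis
    proof (cases "hip P \<rho> > 0")
      case True
      have "\<exists>i\<in>I. h i > 0"
      proof (rule ccontr)
        assume "\<not> (\<exists>i\<in>I. h i > 0)"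
        then have "\<forall>i\<in>I. h i = 0" using h0 by (force simp: I_def)
        then have "sum h I = 0" by simp
        then show False using True hP by simp
      qed
      then obtain i where i: "i \<in> I" "h i > 0" by blast
      have Isum: "(\<Sum>i\<in>I. ereal (h i) * \<alpha> i) = -\<infinity>"
      proof (rule sum_minf[OF IJ(3)])
        show "\<forall>x\<in>I. ereal (h x) * \<alpha> x \<noteq> \<infinity>"
        proof
          fix x assume x: "x \<in> I"
          then have "h x \<ge> 0" "\<alpha> x = -\<infinity>" using h0 unfolding I_def by auto
          then show "ereal (h x) * \<alpha> x \<noteq> \<infinity>"
            by (cases "h x = 0") auto
        qed
        show "\<exists>x\<in>I. ereal (h x) * \<alpha> x = -\<infinity>"
          using i unfolding I_def by auto
      qed
      have "l \<rho> = -\<infinity>" unfolding lsplit Isum Jsum by simp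
      moreover have "ext_hip A P \<rho> = -\<infinity>" unfolding ext_hip_def using True by simp
      ultimately show ?thesis by simp
    next
      case False
      then have P0: "hip P \<rho> = 0" using hP0 by simp
      then have hI0: "\<And>i. i \<in> I \<Longrightarrow> h i = 0"
        unfolding hP using h0 IJ(3) by (subst (asm) sum_nonneg_eq_0_iff) (auto simp: I_def)
      have Isum: "(\<Sum>i\<in>I. ereal (h i) * \<alpha> i) = 0" using hI0 by (simp add: zero_ereal_def[symmetric])
      have ortho: "\<forall>v\<in>Vs. cdot v (w k) = 0" for k
      proof
        fix v assume "v \<in> Vs"
        then obtain i j where ij: "i \<in> I" "v = V i j" unfolding Vs_def by auto
        have im: "i \<in> {1..m}" using ij by (auto simp: I_def)
        have "(\<Sum>k\<in>UNIV. \<Sum>j\<in>UNIV. (cmod (cdot (V i j) (w k)))^2) = 0"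
          using hqf[OF im] hI0[OF ij(1)] by simp
        then have "\<forall>k\<in>UNIV. (\<Sum>j\<in>UNIV. (cmod (cdot (V i j) (w k)))^2) = 0"
          by (subst (asm) sum_nonneg_eq_0_iff) (auto intro: sum_nonneg)
        then have "(\<Sum>j\<in>UNIV. (cmod (cdot (V i j) (w k)))^2) = 0" by blast
        then have "\<forall>j\<in>UNIV. (cmod (cdot (V i j) (w k)))^2 = 0"
          by (subst (asm) sum_nonneg_eq_0_iff) auto
        then show "cdot v (w k) = 0" using ij by simp
      qed
      have Qw: "Q *v w k = w k" for k
        using kerR ortho[of k] unfolding Q_def by (simp add: matrix_vector_mult_diff_rdistrib)
      have "hip A \<rho> = (\<Sum>k\<in>UNIV. Re (cdot (w k) (A *v w k)))" by (rule hipf[OF hA])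
      also have "\<dots> = (\<Sum>k\<in>UNIV. Re (cdot (w k) (A' *v w k)))"
      proof (intro sum.cong refl)
        fix k
        have "cdot (w k) (A *v w k) = cdot (Q *v w k) (A' *v (Q *v w k))"
          unfolding A_def by (simp add: matrix_vector_mul_assoc[symmetric] herm_cdot[OF hQ])
        then show "Re (cdot (w k) (A *v w k)) = Re (cdot (w k) (A' *v w k))" by (simp add: Qw)
      qed
      also have "\<dots> = hip A' \<rho>" by (rule hipf[OF hA', symmetric])
      finally have AA': "hip A \<rho> = hip A' \<rho>" .
      have "l \<rho> = ereal (hip A' \<rho>)" unfolding lsplit Isum Jsum by simp
      moreover have "ext_hip A P \<rho> = ereal (hip A \<rho>)" unfolding ext_hip_def P0 by simp
      ultimately show ?thesis using AA' by simp
    qed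
  qed
  show ?thesis using ext main by blast
qed


end
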